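(* Let $S\subseteq\mathbb{R}^{n_1}\times\dots\times\mathbb{R}^{n_m}\times\mathbb{R}^p$, with elements written $(x^1,\dots,x^m,z)$. (1) If $S$ is permutation-invariant with respect to $x^k$ for every $k=1,\dots,m$, then $\mathrm{conv}(S)=\{(x^1,\dots,x^m,z)\mid \exists u^1,\dots,u^m:\ (u^1,\dots,u^m,z)\in\mathrm{conv}(S_0),\ u^k\ge_m x^k,\ k=1,\dots,m\}$, where $S_0=S\cap(\Delta^{n_1}\times\dots\times\Delta^{n_m}\times\mathbb{R}^p)$. (2) If $S$ is sign-invariant with respect to $x^k$ for every $k$, then $\mathrm{conv}(S)=\{(x^1,\dots,x^m,z)\mid \exists u^1,\dots,u^m:\ (u^1,\dots,u^m,z)\in\mathrm{conv}(S_0),\ u^k\ge|x^k|,\ k=1,\dots,m\}$, where $S_0=S\cap(\mathbb{R}^{n_1}_+\times\dots\times\mathbb{R}^{n_m}_+\times\mathbb{R}^p)$. (3) If $S$ is both permutation-invariant and sign-invariant with respect to $x^k$ for every $k$, then $\mathrm{conv}(S)=\{(x^1,\dots,x^m,z)\mid \exists u^1,\dots,u^m:\ (u^1,\dots,u^m,z)\in\mathrm{conv}(S_0),\ u^k\ge_{wm}|x^k|,\ k=1,\dots,m\}$, where $S_0=S\cap\{(u^1,\dots,u^m,z)\mid u^k_1\ge\dots\ge u^k_{n_k}\ge 0,\ k=1,\dots,m\}$.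
   Context: $\Delta^n=\{x\in\mathbb{R}^n\mid x_1\ge\dots\ge x_n\}$. $S$ is permutation-invariant with respect to $x^k$ if replacing $x^k$ by $Px^k$, for any $n_k\times n_k$ permutation matrix $P$, keeps the point in $S$; it is sign-invariant with respect to $x^k$ if replacing $x^k$ by any $\bar x^k$ with $|\bar x^k|=|x^k|$ (componentwise absolute value) keeps the point in $S$. For $x\in\mathbb{R}^n$, $x_{[i]}$ is the $i$-th largest component. $x\ge_m y$ means $\sum_{i=1}^j x_{[i]}\ge\sum_{i=1}^j y_{[i]}$ for $j<n$ with equality for $j=n$; $x\ge_{wm}y$ means $\sum_{i=1}^j x_{[i]}\ge\sum_{i=1}^j y_{[i]}$ for all $j=1,\dots,n$. Inequalities between vectors are componentwise. *)

theory Defs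
  imports "HOL-Analysis.Analysis" "HOL-Library.Function_Algebras"
begin

instantiation "fun" :: (type, scaleR) scaleR
begin
definition scaleR_fun :: "real \<Rightarrow> ('a \<Rightarrow> 'b) \<Rightarrow> 'a \<Rightarrow> 'b"
  where "scaleR_fun r f = (\<lambda>x. r *\<^sub>R f x)"
instance ..
end

instance "fun" :: (type, real_vector) real_vector
  by standard (auto simp: scaleR_fun_def fun_eq_iff scaleR_add_right scaleR_add_left)

text \<open>A point (x^1,...,x^m,z) is represented as a pair (x, z) with
  x :: nat => nat => real (x k i is the (i+1)-th component of x^(k+1), 0-based)
  and z :: nat => real.\<close>

definition vecs :: "nat \<Rightarrow> (nat \<Rightarrow> real) set" where
  "vecs d = {v. \<forall>i\<ge>d. v i = 0}"

definition space :: "nat \<Rightarrow> (nat \<Rightarrow> nat) \<Rightarrow> nat \<Rightarrow> ((nat \<Rightarrow> nat \<Rightarrow> real) \<times> (nat \<Rightarrow> real)) set" where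
  "space m n p = {(x, z). (\<forall>k<m. x k \<in> vecs (n k)) \<and> (\<forall>k\<ge>m. x k = (\<lambda>_. 0)) \<and> z \<in> vecs p}"

definition perm_invariant ::
  "((nat \<Rightarrow> nat \<Rightarrow> real) \<times> (nat \<Rightarrow> real)) set \<Rightarrow> (nat \<Rightarrow> nat) \<Rightarrow> nat \<Rightarrow> bool" where
  "perm_invariant S n k \<longleftrightarrow>
     (\<forall>x z \<sigma>. (x, z) \<in> S \<longrightarrow> \<sigma> permutes {..<n k} \<longrightarrow> (x(k := x k \<circ> \<sigma>), z) \<in> S)"

definition sign_invariant ::
  "((nat \<Rightarrow> nat \<Rightarrow> real) \<times> (nat \<Rightarrow> real)) set \<Rightarrow> (nat \<Rightarrow> nat) \<Rightarrow> nat \<Rightarrow> bool" where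
  "sign_invariant S n k \<longleftrightarrow>
     (\<forall>x z y. (x, z) \<in> S \<longrightarrow> y \<in> vecs (n k) \<longrightarrow> (\<forall>i<n k. \<bar>y i\<bar> = \<bar>x k i\<bar>)
        \<longrightarrow> (x(k := y), z) \<in> S)"

text \<open>Components of a vector of length d sorted in nonincreasing order;
  (decr d x) ! (i-1) is x_[i].\<close>
definition decr :: "nat \<Rightarrow> (nat \<Rightarrow> real) \<Rightarrow> real list" where
  "decr d x = rev (sort (map x [0..<d]))"

definition majorizes :: "nat \<Rightarrow> (nat \<Rightarrow> real) \<Rightarrow> (nat \<Rightarrow> real) \<Rightarrow> bool" where
  "majorizes d x y \<longleftrightarrow>
     (\<forall>j<d. sum_list (take j (decr d x)) \<ge> sum_list (take j (decr d y))) \<and>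
     sum_list (decr d x) = sum_list (decr d y)"

definition weakly_majorizes :: "nat \<Rightarrow> (nat \<Rightarrow> real) \<Rightarrow> (nat \<Rightarrow> real) \<Rightarrow> bool" where
  "weakly_majorizes d x y \<longleftrightarrow>
     (\<forall>j\<in>{1..d}. sum_list (take j (decr d x)) \<ge> sum_list (take j (decr d y)))"

definition nonincreasing :: "nat \<Rightarrow> (nat \<Rightarrow> real) \<Rightarrow> bool" where
  "nonincreasing d v \<longleftrightarrow> (\<forall>i j. i \<le> j \<longrightarrow> j < d \<longrightarrow> v j \<le> v i)"

end

theory Submission
  imports Defs "HOL-Combinatorics.List_Permutation"
begin


lemma sum_take_map_upt: "j \<le> d \<Longrightarrow> sum_list (take j (map f [0..<d])) = (\<Sum>i<j. f i)"
  by (simp add: take_map sum_list_sum_nth lessThan_atLeast0)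

lemma decr_perm:
  obtains p where "p permutes {..<d}" "nonincreasing d (x \<circ> p)"
    "\<And>j. j \<le> d \<Longrightarrow> sum_list (take j (decr d x)) = (\<Sum>i<j. x (p i))"
proof -
  have "mset (decr d x) = mset (map x [0..<d])" by (simp add: decr_def)
  then obtain p where p: "p permutes {..<length (map x [0..<d])}"
     "permute_list p (map x [0..<d]) = decr d x" by (rule mset_eq_permutation)
  have pd: "p permutes {..<d}" using p by simp
  have eq: "decr d x = map (\<lambda>i. x (p i)) [0..<d]"
    using p(2)[symmetric] permutes_in_image[OF pd]
    by (auto simp: permute_list_def intro!: map_cong)
  have "sorted (sort (map x [0..<d]))" by simp
  hence "sorted_wrt (\<ge>) (decr d x)" by (simp add: decr_def sorted_wrt_rev)
  hence "nonincreasing d (x \<circ> p)"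
    unfolding nonincreasing_def eq
    by (auto simp: sorted_wrt_iff_nth_less le_less)
  show ?thesis
    by (rule that[OF pd \<open>nonincreasing d (x \<circ> p)\<close>]) (simp add: eq sum_take_map_upt)
qed

lemma decr_sorted: "nonincreasing d x \<Longrightarrow> decr d x = map x [0..<d]"
proof -
  assume a: "nonincreasing d x"
  have "sort (map x [0..<d]) = rev (map x [0..<d])"
  proof (rule properties_for_sort)
    show "mset (rev (map x [0..<d])) = mset (map x [0..<d])" by simp
    show "sorted (rev (map x [0..<d]))"
      unfolding sorted_wrt_rev using a by (auto simp: sorted_wrt_iff_nth_less nonincreasing_def)
  qed
  thus ?thesis by (simp add: decr_def)
qed

lemma topj:
  assumes v: "nonincreasing d v" and I: "I \<subseteq> {..<d}" "card I = j"
  shows "sum v I \<le> (\<Sum>i<j. v i)"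
proof (cases "j = 0")
  case True
  have "finite I" using I finite_subset by blast
  with True I show ?thesis by simp
next
  case False
  have fI: "finite I" using I finite_subset by blast
  have jd: "j \<le> d" using I card_mono[of "{..<d}" I] by simp
  define J where "J = {..<j}"
  define t where "t = v (j - 1)"
  have s1: "sum v I = sum v (I \<inter> J) + sum v (I - J)"
    using fI by (rule sum.Int_Diff)
  have s2: "sum v J = sum v (I \<inter> J) + sum v (J - I)"
    unfolding J_def by (subst sum.Int_Diff[of _ _ I]) (auto simp: Int_commute)
  have c: "card (I - J) = card (J - I)"
    using fI I(2) by (simp add: card_Diff_subset_Int J_def Int_commute)
  have b1: "sum v (I - J) \<le> of_nat (card (I - J)) * t"
    apply (rule sum_bounded_above)
    using I v False unfolding J_def t_def nonincreasing_def by auto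
  have b2: "of_nat (card (J - I)) * t \<le> sum v (J - I)"
    apply (rule sum_bounded_below)
    using jd v False unfolding J_def t_def nonincreasing_def by auto
  show ?thesis using s1 s2 b1 b2 c unfolding J_def by  (metis (no_types, lifting) add_le_cancel_left order_trans) 
qed

lemma topj_perm:
  assumes p: "p permutes {..<d}" and v: "nonincreasing d (v \<circ> p)"
    and I: "I \<subseteq> {..<d}" "card I = j"
  shows "sum v I \<le> (\<Sum>i<j. v (p i))"
proof -
  have ip: "inv p permutes {..<d}" using p by (rule permutes_inv)
  have "sum v I = sum (v \<circ> p) (inv p ` I)"
    by (subst sum.reindex) (auto intro: inj_on_subset[OF permutes_inj[OF ip]]
        simp: permutes_inverses(1)[OF p])
  also have "\<dots> \<le> (\<Sum>i<j. (v \<circ> p) i)"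
  proof (rule topj[OF v])
    show "inv p ` I \<subseteq> {..<d}" using I(1) permutes_in_image[OF ip] by auto
    show "card (inv p ` I) = j" using I(2)
      by (simp add: card_image inj_on_subset[OF permutes_inj[OF ip]])
  qed
  finally show ?thesis by simp
qed

lemma sum_perm_image:
  assumes "q permutes {..<d}"
  shows "(\<Sum>i<j. x (q i)) = sum x (q ` {..<j})"
  by (subst sum.reindex) (auto intro: inj_on_subset[OF permutes_inj[OF assms]])

lemma card_perm_image:
  assumes "q permutes {..<d}" "j \<le> d"
  shows "q ` {..<j} \<subseteq> {..<d}" "card (q ` {..<j}) = j"
proof -
  show "q ` {..<j} \<subseteq> {..<d}"
  proof
    fix x assume "x \<in> q ` {..<j}"
    then obtain i where "i < j" "x = q i" by auto
    then show "x \<in> {..<d}" using permutes_in_image[OF assms(1)] assms(2) by auto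
  qed
  have "inj_on q {..<j}" using permutes_inj[OF assms(1)] by (rule inj_on_subset) simp
  then show "card (q ` {..<j}) = j" by (simp add: card_image)
qed

lemma prefix_bound:
  fixes v y :: "nat \<Rightarrow> real"
  assumes "\<forall>i<a. v i = y i" "\<forall>i. a < i \<and> i < j0 \<longrightarrow> y i \<le> v i"
  shows "a < j \<Longrightarrow> j \<le> j0 \<Longrightarrow> v a - y a \<le> (\<Sum>i<j. v i - y i)"
proof (induction j)
  case 0 then show ?case by simp
next
  case (Suc j)
  show ?case
  proof (cases "j = a")
    case True
    have "(\<Sum>i<a. v i - y i) = 0" using assms(1) by simp
    then show ?thesis using True by simp
  next
    case False
    then have "a < j" "j < j0" using Suc.prems by auto
    then have "y j \<le> v j" using assms(2) by auto
    then show ?thesis using Suc.IH \<open>a < j\<close> \<open>j < j0\<close> by simp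
  qed
qed

lemma pair_comb_eq:
  fixes w :: "nat \<Rightarrow> nat \<Rightarrow> real"
  shows "(w(k := f), z) = (1 - t) *\<^sub>R (w, z) + t *\<^sub>R (w(k := g), z) \<longleftrightarrow>
     f = (\<lambda>i. (1 - t) * w k i + t * g i)"
proof -
  have e1: "(1 - t) *\<^sub>R z + t *\<^sub>R z = z" by (simp add: scaleR_left_distrib[symmetric])
  have e2: "(1 - t) *\<^sub>R w + t *\<^sub>R w(k:=g) = w(k := (\<lambda>i. (1-t) * w k i + t * g i))"
  proof (rule ext)
    fix k'
    show "((1 - t) *\<^sub>R w + t *\<^sub>R w(k:=g)) k' = (w(k := (\<lambda>i. (1-t) * w k i + t * g i))) k'"
    proof (cases "k' = k")
      case True then show ?thesis by (simp add: scaleR_fun_def plus_fun_def)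
    next
      case False
      have "((1 - t) *\<^sub>R w + t *\<^sub>R w(k:=g)) k' = (1 - t) *\<^sub>R w k' + t *\<^sub>R w k'"
        using False by (simp add: scaleR_fun_def)
      also have "\<dots> = w k'" by (simp add: scaleR_left_distrib[symmetric])
      finally show ?thesis using False by simp
    qed
  qed
  have "(1 - t) *\<^sub>R (w, z) + t *\<^sub>R (w(k := g), z) = (w(k := (\<lambda>i. (1-t) * w k i + t * g i)), z)"
    using e1 e2 by simp
  then have "((w(k := f), z) = (1 - t) *\<^sub>R (w, z) + t *\<^sub>R (w(k := g), z)) \<longleftrightarrow>
     w(k := f) = w(k := (\<lambda>i. (1-t) * w k i + t * g i))" by simp
  also have "\<dots> \<longleftrightarrow> f = (\<lambda>i. (1-t) * w k i + t * g i)"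
  proof
    assume "w(k := f) = w(k := (\<lambda>i. (1-t) * w k i + t * g i))"
    then have "(w(k := f)) k = (w(k := (\<lambda>i. (1-t) * w k i + t * g i))) k" by simp
    then show "f = (\<lambda>i. (1-t) * w k i + t * g i)" by simp
  qed simp
  finally show ?thesis .
qed

definition signmove :: "((nat \<Rightarrow> nat \<Rightarrow> real) \<times> (nat \<Rightarrow> real)) set \<Rightarrow> nat \<Rightarrow> nat \<Rightarrow> bool" where
  "signmove T d k \<longleftrightarrow> (\<forall>w z i a. (w,z)\<in>T \<longrightarrow> i<d \<longrightarrow> \<bar>a\<bar> \<le> \<bar>w k i\<bar> \<longrightarrow> (w(k := (w k)(i:=a)), z) \<in> T)"

lemma core:
  fixes T :: "((nat \<Rightarrow> nat \<Rightarrow> real) \<times> (nat \<Rightarrow> real)) set" and y :: "nat \<Rightarrow> real"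
  assumes cT: "convex T"
    and perm: "\<And>w z \<sigma>. (w,z) \<in> T \<Longrightarrow> \<sigma> permutes {..<d} \<Longrightarrow> (w(k := w k \<circ> \<sigma>), z) \<in> T"
    and ys: "nonincreasing d y" and yv: "y \<in> vecs d"
  shows "(w,z) \<in> T \<Longrightarrow> w k \<in> vecs d \<Longrightarrow> (\<forall>j\<le>d. (\<Sum>i<j. y i) \<le> (\<Sum>i<j. w k i)) \<Longrightarrow>
     ((\<Sum>i<d. y i) = (\<Sum>i<d. w k i) \<or> ((\<forall>i<d. 0 \<le> y i) \<and> signmove T d k)) \<Longrightarrow> (w(k := y), z) \<in> T"
proof (induction "card {i. i<d \<and> w k i \<noteq> y i}" arbitrary: w rule: less_induct)
  case less
  define M where "M = {i. i<d \<and> w k i \<noteq> y i}"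
  define v where "v = w k"
  have fM: "finite M" unfolding M_def by auto
  show ?case
  proof (cases "M = {}")
    case True
    then have "w k = y" using less.prems(2) yv by (auto simp: M_def vecs_def fun_eq_iff) (metis not_le)
    then show ?thesis using less.prems(1) by (metis fun_upd_triv)
  next
    case False
    define a where "a = Min M"
    have aM: "a \<in> M" using False fM by (simp add: a_def)
    have ad: "a < d" using aM by (simp add: M_def)
    have below: "\<forall>i<a. v i = y i"
    proof (intro allI impI)
      fix i assume "i < a"
      show "v i = y i"
      proof (rule ccontr)
        assume "v i \<noteq> y i"
        then have "i \<in> M" using \<open>i<a\<close> ad by (simp add: M_def v_def)
        then have "a \<le> i" using fM by (simp add: a_def)
        then show False using \<open>i<a\<close> by simp
      qed
    qed
    have "(\<Sum>i<Suc a. y i) \<le> (\<Sum>i<Suc a. v i)" using less.prems(3)[rule_format, of "Suc a"] ad unfolding v_def by linarith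
    moreover have "(\<Sum>i<a. y i) = (\<Sum>i<a. v i)" using below by simp
    ultimately have "y a \<le> v a" by simp
    moreover have "v a \<noteq> y a" using aM by (simp add: M_def v_def)
    ultimately have yav: "y a < v a" by simp
    define B where "B = {b. a<b \<and> b<d \<and> v b < y b}"
    have pref: "\<And>j. j \<le> d \<Longrightarrow> (\<Sum>i<j. y i) \<le> (\<Sum>i<j. v i)" using less.prems(3) by (simp add: v_def)
    show ?thesis
    proof (cases "B = {}")
      case False
      have fB: "finite B" unfolding B_def by auto
      define b where "b = Min B"
      have bB: "b \<in> B" using False fB by (simp add: b_def)
      then have ab: "a < b" "b < d" "v b < y b" by (auto simp: B_def)
      have between: "\<forall>i. a < i \<and> i < b \<longrightarrow> y i \<le> v i"
      proof (intro allI impI)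
        fix i assume i: "a < i \<and> i < b"
        show "y i \<le> v i"
        proof (rule ccontr)
          assume "\<not> y i \<le> v i"
          then have "i \<in> B" using i ab by (auto simp: B_def)
          then have "b \<le> i" using fB by (simp add: b_def)
          then show False using i by simp
        qed
      qed
      have "y b \<le> y a" using ys ab by (simp add: nonincreasing_def)
      define \<delta> where "\<delta> = min (v a - y a) (y b - v b)"
      have dpos: "0 < \<delta>" using yav ab by (simp add: \<delta>_def)
      have gap: "v b < v a" using ab yav \<open>y b \<le> y a\<close> by linarith
      have d2: "2 * \<delta> \<le> v a - v b" using ab yav \<open>y b \<le> y a\<close> unfolding \<delta>_def min_def by auto
      define v' where "v' = (\<lambda>i. v i - (if i = a then \<delta> else 0) + (if i = b then \<delta> else 0))"
      define t where "t = \<delta> / (v a - v b)"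
      have t01: "0 \<le> t" "t \<le> 1" using dpos gap d2 by (auto simp: t_def field_simps)
      have Tsw: "(w(k := v \<circ> Transposition.transpose a b), z) \<in> T"
        using perm[OF less.prems(1), of "Transposition.transpose a b"] ab ad
        by (simp add: permutes_swap_id v_def)
      have veq: "v' = (\<lambda>i. (1 - t) * w k i + t * (v \<circ> Transposition.transpose a b) i)"
      proof
        fix i
        have tt: "t * (v a - v b) = \<delta>" using gap by (simp add: t_def)
        show "v' i = (1 - t) * w k i + t * (v \<circ> Transposition.transpose a b) i"
          using ab tt unfolding v'_def v_def[symmetric]
          by (cases "i = a"; cases "i = b") (auto simp: algebra_simps)
      qed
      have "(w(k := v'), z) = (1 - t) *\<^sub>R (w,z) + t *\<^sub>R (w(k := v \<circ> Transposition.transpose a b), z)"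
        by (subst pair_comb_eq) (rule veq)
      then have Tv': "(w(k := v'), z) \<in> T"
        using convexD[OF cT less.prems(1) Tsw, of "1 - t" t] t01 by simp
      have sv': "\<And>j. (\<Sum>i<j. v' i) = (\<Sum>i<j. v i) - (if a < j then \<delta> else 0) + (if b < j then \<delta> else 0)"
        by (simp add: v'_def sum.distrib sum_subtractf)
      define M' where "M' = {i. i<d \<and> (w(k:=v')) k i \<noteq> y i}"
      have "M' \<subset> M"
      proof
        show "M' \<subseteq> M" using ab aM by (auto simp: M'_def M_def v'_def v_def)
        have "a \<notin> M' \<or> b \<notin> M'"
          using ab by (auto simp: M'_def v'_def \<delta>_def min_def split: if_splits)
        moreover have "b \<in> M" using ab by (simp add: M_def v_def)
        ultimately show "M' \<noteq> M" using aM by auto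
      qed
      then have cM: "card M' < card M" using fM by (simp add: psubset_card_mono)
      have pref': "\<forall>j\<le>d. (\<Sum>i<j. y i) \<le> (\<Sum>i<j. (w(k:=v')) k i)"
      proof (intro allI impI)
        fix j assume jd: "j \<le> d"
        show "(\<Sum>i<j. y i) \<le> (\<Sum>i<j. (w(k:=v')) k i)"
        proof (cases "a < j \<and> j \<le> b")
          case True
          have "v a - y a \<le> (\<Sum>i<j. v i - y i)"
            by (rule prefix_bound[OF below between]) (use True in auto)
          then show ?thesis using True sv'[of j] by (simp add: sum_subtractf \<delta>_def)
        next
          case False
          then show ?thesis using sv'[of j] pref[OF jd] ab by auto
        qed
      qed
      have vec': "(w(k:=v')) k \<in> vecs d"
        using less.prems(2) ab by (auto simp: vecs_def v'_def v_def)
      have H': "(\<Sum>i<d. y i) = (\<Sum>i<d. (w(k:=v')) k i) \<or> ((\<forall>i<d. 0 \<le> y i) \<and> signmove T d k)"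
        using less.prems(4) sv'[of d] ab by (simp add: v_def)
      have "((w(k:=v'))(k := y), z) \<in> T"
        by (rule less.hyps[OF _ Tv' vec' pref' H']) (use cM in \<open>simp add: M_def M'_def\<close>)
      then show ?thesis by simp
    next
      case True
      have between: "\<forall>i. a < i \<and> i < d \<longrightarrow> y i \<le> v i"
      proof (intro allI impI)
        fix i assume i: "a < i \<and> i < d"
        then have "i \<notin> B" using True by auto
        then show "y i \<le> v i" using i unfolding B_def by auto
      qed
      have pb: "\<And>j. a < j \<Longrightarrow> j \<le> d \<Longrightarrow> v a - y a \<le> (\<Sum>i<j. v i - y i)"
        using prefix_bound[OF below between] by simp
      have "(\<Sum>i<d. y i) \<noteq> (\<Sum>i<d. w k i)"
        using pb[of d] ad yav by (simp add: sum_subtractf v_def)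
      then have y0: "\<forall>i<d. 0 \<le> y i" and sm: "signmove T d k" using less.prems(4) by auto
      define v' where "v' = v(a := y a)"
      have Tv': "(w(k := v'), z) \<in> T"
        using sm less.prems(1) ad y0 yav unfolding signmove_def v'_def v_def
        by (metis abs_of_nonneg dual_order.trans less_imp_le abs_ge_self)
      define M' where "M' = {i. i<d \<and> (w(k:=v')) k i \<noteq> y i}"
      have "M' \<subset> M" using aM by (auto simp: M'_def M_def v'_def v_def)
      then have cM: "card M' < card M" using fM by (simp add: psubset_card_mono)
      have sv': "\<And>j. (\<Sum>i<j. v' i) = (\<Sum>i<j. v i) - (if a < j then v a - y a else 0)"
      proof -
        fix j
        have "v' = (\<lambda>i. v i - (if i = a then v a - y a else 0))" by (auto simp: v'_def)
        then show "(\<Sum>i<j. v' i) = (\<Sum>i<j. v i) - (if a < j then v a - y a else 0)"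
          by (simp add: sum_subtractf)
      qed
      have pref': "\<forall>j\<le>d. (\<Sum>i<j. y i) \<le> (\<Sum>i<j. (w(k:=v')) k i)"
      proof (intro allI impI)
        fix j assume jd: "j \<le> d"
        show "(\<Sum>i<j. y i) \<le> (\<Sum>i<j. (w(k:=v')) k i)"
        proof (cases "a < j")
          case True
          then show ?thesis using pb[OF True jd] sv'[of j] by (simp add: sum_subtractf)
        next
          case False
          then show ?thesis using sv'[of j] pref[OF jd] by auto
        qed
      qed
      have vec': "(w(k:=v')) k \<in> vecs d"
        using less.prems(2) ad yv by (auto simp: vecs_def v'_def v_def)
      have H': "(\<Sum>i<d. y i) = (\<Sum>i<d. (w(k:=v')) k i) \<or> ((\<forall>i<d. 0 \<le> y i) \<and> signmove T d k)"
        using y0 sm by simp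
      have "((w(k:=v'))(k := y), z) \<in> T"
        by (rule less.hyps[OF _ Tv' vec' pref' H']) (use cM in \<open>simp add: M_def M'_def\<close>)
      then show ?thesis by simp
    qed
  qed
qed

lemma hull_closed_map:
  fixes S :: "'a::real_vector set"
  assumes inS: "\<And>q. q \<in> S \<Longrightarrow> f q \<in> S"
    and lin: "\<And>a b q1 q2. f (a *\<^sub>R q1 + b *\<^sub>R q2) = a *\<^sub>R f q1 + b *\<^sub>R f q2"
    and q: "q \<in> convex hull S"
  shows "f q \<in> convex hull S"
proof -
  have "convex hull S \<subseteq> {q. f q \<in> convex hull S}"
  proof (rule hull_minimal)
    show "S \<subseteq> {q. f q \<in> convex hull S}" using inS by (auto intro: hull_inc)
    show "convex {q. f q \<in> convex hull S}"
      by (rule convexI) (simp add: lin convexD[OF convex_convex_hull])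
  qed
  with q show ?thesis by auto
qed

lemma hull_perm:
  assumes "perm_invariant S n k" "(w,z) \<in> convex hull S" "\<sigma> permutes {..<n k}"
  shows "(w(k := w k \<circ> \<sigma>), z) \<in> convex hull S"
proof -
  define f :: "((nat \<Rightarrow> nat \<Rightarrow> real) \<times> (nat \<Rightarrow> real)) \<Rightarrow> ((nat \<Rightarrow> nat \<Rightarrow> real) \<times> (nat \<Rightarrow> real))"
    where "f = (\<lambda>q. ((fst q)(k := fst q k \<circ> \<sigma>), snd q))"
  have "f (w,z) \<in> convex hull S"
  proof (rule hull_closed_map[OF _ _ assms(2)])
    show "f q \<in> S" if "q \<in> S" for q
      using assms(1) assms(3) that unfolding perm_invariant_def f_def by (cases q) auto
    show "f (a *\<^sub>R q1 + b *\<^sub>R q2) = a *\<^sub>R f q1 + b *\<^sub>R f q2" for a b q1 q2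
      by (auto simp: fun_eq_iff scaleR_fun_def f_def)
  qed
  then show ?thesis by (simp add: f_def)
qed

lemma hull_flip:
  assumes "sign_invariant S n k" "S \<subseteq> space m n p" "k < m" "(w,z) \<in> convex hull S" "i < n k"
  shows "(w(k := (w k)(i := - w k i)), z) \<in> convex hull S"
proof -
  define f :: "((nat \<Rightarrow> nat \<Rightarrow> real) \<times> (nat \<Rightarrow> real)) \<Rightarrow> ((nat \<Rightarrow> nat \<Rightarrow> real) \<times> (nat \<Rightarrow> real))"
    where "f = (\<lambda>q. ((fst q)(k := (fst q k)(i := - fst q k i)), snd q))"
  have "f (w,z) \<in> convex hull S"
  proof (rule hull_closed_map[OF _ _ assms(4)])
    show "f q \<in> S" if "q \<in> S" for q
    proof (cases q)
      case (Pair x z')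
      have "x k \<in> vecs (n k)" using assms(2,3) that Pair by (auto simp: space_def)
      then have "(x k)(i := - x k i) \<in> vecs (n k)" using assms(5) by (auto simp: vecs_def)
      then show ?thesis using assms(1) that Pair unfolding sign_invariant_def f_def by auto
    qed
    show "f (a *\<^sub>R q1 + b *\<^sub>R q2) = a *\<^sub>R f q1 + b *\<^sub>R f q2" for a b q1 q2
      by (auto simp: fun_eq_iff scaleR_fun_def f_def)
  qed
  then show ?thesis by (simp add: f_def)
qed

lemma t01_lemma: fixes a c t :: real assumes aa: "\<bar>a\<bar> \<le> \<bar>c\<bar>" and F: "c \<noteq> 0" and t: "t = (c - a) / (2 * c)"
  shows "0 \<le> t" "t \<le> 1"
proof -
  show "0 \<le> t"
  proof (cases "c > 0")
    case True then show ?thesis using aa unfolding t by (intro divide_nonneg_pos) auto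
  next
    case False then have "c < 0" using F by simp
    then show ?thesis using aa unfolding t by (intro divide_nonpos_neg) auto
  qed
  show "t \<le> 1"
  proof (cases "c > 0")
    case True then show ?thesis using aa unfolding t by (simp add: divide_le_eq)
  next
    case False then have "c < 0" using F by simp
    then show ?thesis using aa unfolding t by (simp add: divide_le_eq)
  qed
qed

lemma t_eq: fixes a c t :: real assumes "c \<noteq> 0" "t = (c - a) / (2 * c)"
  shows "(1 - t) * c + t * (- c) = a"
proof -
  have "2 * c * t = c - a" using assms by simp
  then show ?thesis by (simp add: algebra_simps)
qed

lemma signmove_from_flip:
  assumes cT: "convex T"
    and flip: "\<And>w z i. (w,z) \<in> T \<Longrightarrow> i < d \<Longrightarrow> (w(k := (w k)(i := - w k i)), z) \<in> T"
  shows "signmove T d k"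
  unfolding signmove_def
proof (intro allI impI)
  fix w z i and a :: real
  assume wT: "(w,z) \<in> T" and id: "i < d" and aa: "\<bar>a\<bar> \<le> \<bar>w k i\<bar>"
  show "(w(k := (w k)(i := a)), z) \<in> T"
  proof (cases "w k i = 0")
    case True
    then have "a = 0" using aa by simp
    then show ?thesis using wT True by (metis fun_upd_triv)
  next
    case False
    define c where "c = w k i"
    define t where "t = (c - a) / (2 * c)"
    have t01: "0 \<le> t" "t \<le> 1" using t01_lemma[OF _ _ t_def] aa False unfolding c_def by auto
    have eq: "(w k)(i := a) = (\<lambda>i'. (1 - t) * w k i' + t * ((w k)(i := - w k i)) i')"
    proof
      fix i'
      have te: "(1 - t) * w k i + t * (- w k i) = a" using t_eq[of "w k i" t a] False t_def c_def by simp
      show "((w k)(i := a)) i' = (1 - t) * w k i' + t * ((w k)(i := - w k i)) i'"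
      proof (cases "i' = i")
        case True then show ?thesis using te by simp
      next
        case False then show ?thesis by (simp add: algebra_simps)
      qed
    qed
    have "(w(k := (w k)(i := a)), z) = (1 - t) *\<^sub>R (w,z) + t *\<^sub>R (w(k := (w k)(i := - w k i)), z)"
      by (subst pair_comb_eq) (rule eq)
    then show ?thesis
      using convexD[OF cT wT flip[OF wT id], of "1 - t" t] t01 by simp
  qed
qed

lemma block_sign:
  fixes T :: "((nat \<Rightarrow> nat \<Rightarrow> real) \<times> (nat \<Rightarrow> real)) set"
  assumes cT: "convex T" and sm: "signmove T d k"
    and wT: "(w,z) \<in> T" and yv: "y \<in> vecs d" and wv: "w k \<in> vecs d"
    and le: "\<forall>i<d. \<bar>y i\<bar> \<le> \<bar>w k i\<bar>"
  shows "(w(k := y), z) \<in> T"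
proof -
  have "j \<le> d \<Longrightarrow> (w(k := (\<lambda>i. if i < j then y i else w k i)), z) \<in> T" for j
  proof (induction j)
    case 0 then show ?case using wT by simp
  next
    case (Suc j)
    let ?wj = "w(k := (\<lambda>i. if i < j then y i else w k i))"
    have "(?wj(k := (?wj k)(j := y j)), z) \<in> T"
      using sm[unfolded signmove_def, rule_format, of ?wj z j "y j"] Suc le by auto
    moreover have "?wj(k := (?wj k)(j := y j)) = w(k := (\<lambda>i. if i < Suc j then y i else w k i))"
      by (auto simp: fun_eq_iff)
    ultimately show ?case by metis
  qed
  from this[of d] have "(w(k := (\<lambda>i. if i < d then y i else w k i)), z) \<in> T" by simp
  moreover have "(\<lambda>i. if i < d then y i else w k i) = y"
    using yv wv by (auto simp: fun_eq_iff vecs_def)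
  ultimately show ?thesis by simp
qed

lemma outer:
  fixes T :: "((nat \<Rightarrow> nat \<Rightarrow> real) \<times> (nat \<Rightarrow> real)) set" and m :: nat
  assumes step: "\<And>k w. k < m \<Longrightarrow> (w,z) \<in> T \<Longrightarrow> w k = u k \<Longrightarrow> (w(k := x k), z) \<in> T"
    and uT: "(u,z) \<in> T" and eqm: "\<forall>k\<ge>m. x k = u k"
  shows "(x,z) \<in> T"
proof -
  have "j \<le> m \<Longrightarrow> ((\<lambda>k. if k < j then x k else u k), z) \<in> T" for j
  proof (induction j)
    case 0 then show ?case using uT by simp
  next
    case (Suc j)
    let ?wj = "(\<lambda>k. if k < j then x k else u k)"
    have "(?wj(j := x j), z) \<in> T" using step[of j ?wj] Suc by simp
    moreover have "?wj(j := x j) = (\<lambda>k. if k < Suc j then x k else u k)" by (auto simp: fun_eq_iff)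
    ultimately show ?case by simp
  qed
  from this[of m] have "((\<lambda>k. if k < m then x k else u k), z) \<in> T" by simp
  moreover have "(\<lambda>k. if k < m then x k else u k) = x" using eqm by (auto simp: fun_eq_iff)
  ultimately show ?thesis by simp
qed

lemma multi:
  fixes S :: "((nat \<Rightarrow> nat \<Rightarrow> real) \<times> (nat \<Rightarrow> real)) set" and m :: nat
  assumes step: "\<And>k w. k < m \<Longrightarrow> (w,z) \<in> S \<Longrightarrow> (w(k := f k (w k)), z) \<in> S"
    and xS: "(x,z) \<in> S"
  shows "((\<lambda>k. if k < m then f k (x k) else x k), z) \<in> S"
proof -
  have "j \<le> m \<Longrightarrow> ((\<lambda>k. if k < j then f k (x k) else x k), z) \<in> S" for j
  proof (induction j)
    case 0 then show ?case using xS by simp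
  next
    case (Suc j)
    let ?wj = "(\<lambda>k. if k < j then f k (x k) else x k)"
    have "(?wj(j := f j (?wj j)), z) \<in> S" using step[of j ?wj] Suc by simp
    moreover have "?wj(j := f j (?wj j)) = (\<lambda>k. if k < Suc j then f k (x k) else x k)" by (auto simp: fun_eq_iff)
    ultimately show ?case by simp
  qed
  from this[of m] show ?thesis by simp
qed



lemma space_convex: "convex (space m n p)"
  unfolding convex_def
proof (intro ballI allI impI)
  fix q1 q2 :: "(nat \<Rightarrow> nat \<Rightarrow> real) \<times> (nat \<Rightarrow> real)" and u v :: real
  assume q1: "q1 \<in> space m n p" and q2: "q2 \<in> space m n p"
  obtain x1 z1 where e1: "q1 = (x1, z1)" by (cases q1)
  obtain x2 z2 where e2: "q2 = (x2, z2)" by (cases q2)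
  have "u *\<^sub>R q1 + v *\<^sub>R q2 = (u *\<^sub>R x1 + v *\<^sub>R x2, u *\<^sub>R z1 + v *\<^sub>R z2)" by (simp add: e1 e2)
  moreover have "(u *\<^sub>R x1 + v *\<^sub>R x2, u *\<^sub>R z1 + v *\<^sub>R z2) \<in> space m n p"
    using q1 q2 unfolding e1 e2 space_def vecs_def by (simp add: scaleR_fun_def plus_fun_def)
  ultimately show "u *\<^sub>R q1 + v *\<^sub>R q2 \<in> space m n p" by simp
qed

lemma hull_space: "S \<subseteq> space m n p \<Longrightarrow> convex hull S \<subseteq> space m n p"
  by (rule hull_minimal) (auto intro: space_convex)

lemma fst_sum_apply:
  fixes h :: "'a \<Rightarrow> (nat \<Rightarrow> nat \<Rightarrow> real) \<times> (nat \<Rightarrow> real)"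
  assumes "finite F"
  shows "fst (\<Sum>s\<in>F. c s *\<^sub>R h s) k i = (\<Sum>s\<in>F. c s * fst (h s) k i)"
  using assms
proof (induction F rule: finite_induct)
  case empty then show ?case by (simp add: zero_fun_def)
next
  case (insert a F) then show ?case by (simp add: plus_fun_def scaleR_fun_def)
qed

lemma snd_sum:
  fixes h :: "'a \<Rightarrow> (nat \<Rightarrow> nat \<Rightarrow> real) \<times> (nat \<Rightarrow> real)"
  assumes "finite F"
  shows "snd (\<Sum>s\<in>F. c s *\<^sub>R h s) = (\<Sum>s\<in>F. c s *\<^sub>R snd (h s))"
  using assms by (induction F rule: finite_induct) simp_all

lemma sum_list_decr: "sum_list (decr d x) = (\<Sum>i<d. x i)"
proof -
  obtain p where p: "p permutes {..<d}" "\<And>j. j \<le> d \<Longrightarrow> sum_list (take j (decr d x)) = (\<Sum>i<j. x (p i))"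
    using decr_perm by blast
  have "length (decr d x) = d" by (simp add: decr_def)
  then have "sum_list (decr d x) = (\<Sum>i<d. x (p i))" using p(2)[of d] by simp
  also have "\<dots> = (\<Sum>i<d. x i)" using sum.permute[OF p(1), of x] by (simp add: comp_def)
  finally show ?thesis .
qed

lemma maj_intro:
  assumes u: "nonincreasing d u"
    and le: "\<And>I. I \<subseteq> {..<d} \<Longrightarrow> sum x I \<le> (\<Sum>i<card I. u i)"
    and eq: "(\<Sum>i<d. x i) = (\<Sum>i<d. u i)"
  shows "majorizes d u x" "weakly_majorizes d u x"
proof -
  obtain q where q: "q permutes {..<d}" "\<And>j. j \<le> d \<Longrightarrow> sum_list (take j (decr d x)) = (\<Sum>i<j. x (q i))"
    using decr_perm by blast
  have du: "decr d u = map u [0..<d]" using u by (rule decr_sorted)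
  have key: "sum_list (take j (decr d x)) \<le> sum_list (take j (decr d u))" if "j \<le> d" for j
  proof -
    have "sum_list (take j (decr d x)) = sum x (q ` {..<j})"
      using q(2)[OF that] sum_perm_image[OF q(1)] by simp
    also have "\<dots> \<le> (\<Sum>i<card (q ` {..<j}). u i)" using le card_perm_image(1)[OF q(1) that] by blast
    also have "\<dots> = sum_list (take j (decr d u))"
      using card_perm_image(2)[OF q(1) that] that by (simp add: du sum_take_map_upt)
    finally show ?thesis .
  qed
  show "majorizes d u x" unfolding majorizes_def using key eq by (simp add: sum_list_decr)
  show "weakly_majorizes d u x" unfolding weakly_majorizes_def using key by simp
qed

lemma block_major:
  fixes T :: "((nat \<Rightarrow> nat \<Rightarrow> real) \<times> (nat \<Rightarrow> real)) set"
  assumes cT: "convex T"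
    and perm: "\<And>w z \<sigma>. (w,z) \<in> T \<Longrightarrow> \<sigma> permutes {..<d} \<Longrightarrow> (w(k := w k \<circ> \<sigma>), z) \<in> T"
    and wT: "(w,z) \<in> T" and wv: "w k \<in> vecs d" and xv: "x' \<in> vecs d"
    and pre: "\<forall>j\<le>d. sum_list (take j (decr d x')) \<le> sum_list (take j (decr d (w k)))"
    and H: "sum_list (decr d x') = sum_list (decr d (w k)) \<or> ((\<forall>i<d. 0 \<le> x' i) \<and> signmove T d k)"
  shows "(w(k := x'), z) \<in> T"
proof -
  obtain p where p: "p permutes {..<d}" "nonincreasing d (w k \<circ> p)"
    "\<And>j. j \<le> d \<Longrightarrow> sum_list (take j (decr d (w k))) = (\<Sum>i<j. w k (p i))"
    using decr_perm by blast
  obtain q where q: "q permutes {..<d}" "nonincreasing d (x' \<circ> q)"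
    "\<And>j. j \<le> d \<Longrightarrow> sum_list (take j (decr d x')) = (\<Sum>i<j. x' (q i))"
    using decr_perm by blast
  define v where "v = w k \<circ> p"
  define y where "y = x' \<circ> q"
  have T1: "(w(k := v), z) \<in> T" using perm[OF wT p(1)] by (simp add: v_def)
  have vv: "(w(k := v)) k \<in> vecs d"
    using wv permutes_not_in[OF p(1)] by (auto simp: vecs_def v_def)
  have yv: "y \<in> vecs d"
    using xv permutes_not_in[OF q(1)] by (auto simp: vecs_def y_def)
  have ys: "nonincreasing d y" using q(2) by (simp add: y_def)
  have pre': "\<forall>j\<le>d. (\<Sum>i<j. y i) \<le> (\<Sum>i<j. (w(k := v)) k i)"
    using pre p(3) q(3) by (simp add: y_def v_def)
  have lx: "length (decr d x') = d" "length (decr d (w k)) = d" by (simp_all add: decr_def)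
  have sx: "sum_list (decr d x') = (\<Sum>i<d. y i)" using q(3)[of d] lx by (simp add: y_def)
  have sw: "sum_list (decr d (w k)) = (\<Sum>i<d. (w(k := v)) k i)" using p(3)[of d] lx by (simp add: v_def)
  have y0: "(\<forall>i<d. 0 \<le> x' i) \<Longrightarrow> (\<forall>i<d. 0 \<le> y i)"
    using permutes_in_image[OF q(1)] by (simp add: y_def)
  have H': "(\<Sum>i<d. y i) = (\<Sum>i<d. (w(k := v)) k i) \<or> ((\<forall>i<d. 0 \<le> y i) \<and> signmove T d k)"
    using H sx sw y0 by auto
  have "((w(k := v))(k := y), z) \<in> T"
    by (rule core[OF cT perm ys yv T1 vv pre' H'])
  then have T2: "(w(k := y), z) \<in> T" by simp
  have ip: "inv q permutes {..<d}" using q(1) by (rule permutes_inv)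
  have "((w(k := y))(k := (w(k := y)) k \<circ> inv q), z) \<in> T" by (rule perm[OF T2 ip])
  moreover have "y \<circ> inv q = x'"
    by (rule ext) (simp add: y_def permutes_inverses(1)[OF q(1)])
  ultimately show ?thesis by simp
qed

lemma wmaj_intro:
  assumes u: "nonincreasing d u"
    and le: "\<And>I. I \<subseteq> {..<d} \<Longrightarrow> sum x I \<le> (\<Sum>i<card I. u i)"
  shows "weakly_majorizes d u x"
proof -
  obtain q where q: "q permutes {..<d}" "\<And>j. j \<le> d \<Longrightarrow> sum_list (take j (decr d x)) = (\<Sum>i<j. x (q i))"
    using decr_perm by blast
  have du: "decr d u = map u [0..<d]" using u by (rule decr_sorted)
  have key: "sum_list (take j (decr d x)) \<le> sum_list (take j (decr d u))" if "j \<le> d" for j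
  proof -
    have "sum_list (take j (decr d x)) = sum x (q ` {..<j})"
      using q(2)[OF that] sum_perm_image[OF q(1)] by simp
    also have "\<dots> \<le> (\<Sum>i<card (q ` {..<j}). u i)" using le card_perm_image(1)[OF q(1) that] by blast
    also have "\<dots> = sum_list (take j (decr d u))"
      using card_perm_image(2)[OF q(1) that] that by (simp add: du sum_take_map_upt)
    finally show ?thesis .
  qed
  show "weakly_majorizes d u x" unfolding weakly_majorizes_def using key by simp
qed

lemma comb_nonincr:
  fixes c :: "'a \<Rightarrow> real"
  assumes "\<forall>s\<in>F. 0 \<le> c s" "\<forall>s\<in>F. nonincreasing d (X s \<circ> P s)"
  shows "nonincreasing d (\<lambda>i. \<Sum>s\<in>F. c s * X s (P s i))"
  unfolding nonincreasing_def
proof (intro allI impI)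
  fix i j assume ij: "i \<le> j" "j < d"
  show "(\<Sum>s\<in>F. c s * X s (P s j)) \<le> (\<Sum>s\<in>F. c s * X s (P s i))"
  proof (rule sum_mono)
    fix s assume sF: "s \<in> F"
    have "X s (P s j) \<le> X s (P s i)" using assms(2) sF ij by (auto simp: nonincreasing_def)
    then show "c s * X s (P s j) \<le> c s * X s (P s i)" using assms(1) sF by (simp add: mult_left_mono)
  qed
qed

lemma comb_le:
  fixes c :: "'a \<Rightarrow> real"
  assumes "\<forall>s\<in>F. 0 \<le> c s" "\<forall>s\<in>F. P s permutes {..<d}" "\<forall>s\<in>F. nonincreasing d (X s \<circ> P s)"
    and I: "I \<subseteq> {..<d}"
  shows "(\<Sum>i\<in>I. \<Sum>s\<in>F. c s * X s i) \<le> (\<Sum>i<card I. \<Sum>s\<in>F. c s * X s (P s i))"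
proof -
  have "(\<Sum>i\<in>I. \<Sum>s\<in>F. c s * X s i) = (\<Sum>s\<in>F. c s * sum (X s) I)"
    by (subst sum.swap) (simp add: sum_distrib_left)
  also have "\<dots> \<le> (\<Sum>s\<in>F. c s * (\<Sum>i<card I. X s (P s i)))"
  proof (rule sum_mono)
    fix s assume sF: "s \<in> F"
    have "sum (X s) I \<le> (\<Sum>i<card I. X s (P s i))"
      using topj_perm[of "P s" d "X s" I "card I"] assms sF by auto
    then show "c s * sum (X s) I \<le> c s * (\<Sum>i<card I. X s (P s i))"
      using assms(1) sF by (simp add: mult_left_mono)
  qed
  also have "\<dots> = (\<Sum>i<card I. \<Sum>s\<in>F. c s * X s (P s i))"
    by (subst sum.swap) (simp add: sum_distrib_left)
  finally show ?thesis .
qed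

lemma comb_major:
  fixes c :: "'a \<Rightarrow> real"
  assumes "\<forall>s\<in>F. 0 \<le> c s" "\<forall>s\<in>F. P s permutes {..<d}" "\<forall>s\<in>F. nonincreasing d (X s \<circ> P s)"
  shows "majorizes d (\<lambda>i. \<Sum>s\<in>F. c s * X s (P s i)) (\<lambda>i. \<Sum>s\<in>F. c s * X s i)"
proof (rule maj_intro(1))
  show "nonincreasing d (\<lambda>i. \<Sum>s\<in>F. c s * X s (P s i))" using assms by (intro comb_nonincr) auto
  show "sum (\<lambda>i. \<Sum>s\<in>F. c s * X s i) I \<le> (\<Sum>i<card I. \<Sum>s\<in>F. c s * X s (P s i))"
    if "I \<subseteq> {..<d}" for I using comb_le[OF assms that] by simp
  have "(\<Sum>i<d. \<Sum>s\<in>F. c s * X s i) = (\<Sum>s\<in>F. c s * (\<Sum>i<d. X s i))"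
    by (subst sum.swap) (simp add: sum_distrib_left)
  also have "\<dots> = (\<Sum>s\<in>F. c s * (\<Sum>i<d. X s (P s i)))"
  proof (rule sum.cong[OF refl])
    fix s assume "s \<in> F"
    then have "P s permutes {..<d}" using assms by auto
    then show "c s * (\<Sum>i<d. X s i) = c s * (\<Sum>i<d. X s (P s i))"
      using sum.permute[of "P s" "{..<d}" "X s"] by (simp add: comp_def)
  qed
  also have "\<dots> = (\<Sum>i<d. \<Sum>s\<in>F. c s * X s (P s i))"
    by (subst sum.swap) (simp add: sum_distrib_left)
  finally show "(\<Sum>i<d. \<Sum>s\<in>F. c s * X s i) = (\<Sum>i<d. \<Sum>s\<in>F. c s * X s (P s i))" .
qed

lemma comb_wmajor:
  fixes c :: "'a \<Rightarrow> real"
  assumes "\<forall>s\<in>F. 0 \<le> c s" "\<forall>s\<in>F. P s permutes {..<d}" "\<forall>s\<in>F. nonincreasing d (X s \<circ> P s)"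
    and Y: "\<forall>i<d. Y i \<le> (\<Sum>s\<in>F. c s * X s i)"
  shows "weakly_majorizes d (\<lambda>i. \<Sum>s\<in>F. c s * X s (P s i)) Y"
proof (rule wmaj_intro)
  show "nonincreasing d (\<lambda>i. \<Sum>s\<in>F. c s * X s (P s i))" using assms by (intro comb_nonincr) auto
  show "sum Y I \<le> (\<Sum>i<card I. \<Sum>s\<in>F. c s * X s (P s i))" if I: "I \<subseteq> {..<d}" for I
  proof -
    have "sum Y I \<le> (\<Sum>i\<in>I. \<Sum>s\<in>F. c s * X s i)" using Y I by (intro sum_mono) auto
    also have "\<dots> \<le> (\<Sum>i<card I. \<Sum>s\<in>F. c s * X s (P s i))" using comb_le[OF assms(1-3) I] .
    finally show ?thesis .
  qed
qed

lemma hull_sub: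
  fixes S Q :: "((nat \<Rightarrow> nat \<Rightarrow> real) \<times> (nat \<Rightarrow> real)) set"
    and g :: "(nat \<Rightarrow> nat \<Rightarrow> real) \<times> (nat \<Rightarrow> real) \<Rightarrow> (nat \<Rightarrow> nat \<Rightarrow> real) \<times> (nat \<Rightarrow> real)"
  assumes Ssp: "S \<subseteq> space m n p"
    and g: "\<And>s. s \<in> S \<Longrightarrow> g s \<in> S \<inter> Q"
    and gsnd: "\<And>s. snd (g s) = snd s"
    and R: "\<And>F c. finite F \<Longrightarrow> F \<subseteq> S \<Longrightarrow> (\<forall>s\<in>F. 0 \<le> c s) \<Longrightarrow>
              R (fst (\<Sum>s\<in>F. c s *\<^sub>R s)) (fst (\<Sum>s\<in>F. c s *\<^sub>R g s))"
  shows "convex hull S \<subseteq> {(x, z) \<in> space m n p. \<exists>u. (u, z) \<in> space m n p \<and>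
           (u, z) \<in> convex hull (S \<inter> Q) \<and> R x u}"
proof
  fix q assume "q \<in> convex hull S"
  then obtain F c where F: "finite F" "F \<subseteq> S" "\<forall>s\<in>F. 0 \<le> c s" "sum c F = 1"
    "(\<Sum>s\<in>F. c s *\<^sub>R s) = q"
    unfolding convex_hull_explicit by blast
  define U where "U = fst (\<Sum>s\<in>F. c s *\<^sub>R g s)"
  have sn: "snd (\<Sum>s\<in>F. c s *\<^sub>R g s) = snd q"
    using snd_sum[OF F(1), of c g] snd_sum[OF F(1), of c "\<lambda>s. s"] F(5) gsnd by simp
  have in0: "(\<Sum>s\<in>F. c s *\<^sub>R g s) \<in> convex hull (S \<inter> Q)"
    by (rule convex_sum[OF F(1) convex_convex_hull F(4)]) (use F in simp, rule hull_inc, use F g in blast)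
  have eqU: "(U, snd q) = (\<Sum>s\<in>F. c s *\<^sub>R g s)" by (simp add: U_def prod_eq_iff sn)
  have sub: "convex hull (S \<inter> Q) \<subseteq> space m n p"
    using hull_space[OF Ssp] hull_mono[of "S \<inter> Q" S] by blast
  have qsp: "q \<in> space m n p" using hull_space[OF Ssp] \<open>q \<in> convex hull S\<close> by blast
  have "R (fst q) U" using R[OF F(1) F(2) F(3)] F(5) by (simp add: U_def)
  then show "q \<in> {(x, z) \<in> space m n p. \<exists>u. (u, z) \<in> space m n p \<and>
           (u, z) \<in> convex hull (S \<inter> Q) \<and> R x u}"
    using qsp in0 eqU sub by (cases q) (auto intro!: exI[of _ U])
qed

theorem theorem4:
  fixes m p :: nat and n :: "nat \<Rightarrow> nat"
    and S :: "((nat \<Rightarrow> nat \<Rightarrow> real) \<times> (nat \<Rightarrow> real)) set"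
  assumes "S \<subseteq> space m n p"
  shows
   "((\<forall>k<m. perm_invariant S n k) \<longrightarrow>
      convex hull S =
        {(x, z) \<in> space m n p. \<exists>u. (u, z) \<in> space m n p \<and>
           (u, z) \<in> convex hull (S \<inter> {(v, w). \<forall>k<m. nonincreasing (n k) (v k)}) \<and>
           (\<forall>k<m. majorizes (n k) (u k) (x k))}) \<and>
    ((\<forall>k<m. sign_invariant S n k) \<longrightarrow>
      convex hull S =
        {(x, z) \<in> space m n p. \<exists>u. (u, z) \<in> space m n p \<and>
           (u, z) \<in> convex hull (S \<inter> {(v, w). \<forall>k<m. \<forall>i<n k. v k i \<ge> 0}) \<and>
           (\<forall>k<m. \<forall>i<n k. u k i \<ge> \<bar>x k i\<bar>)}) \<and>
    ((\<forall>k<m. perm_invariant S n k \<and> sign_invariant S n k) \<longrightarrow>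
      convex hull S =
        {(x, z) \<in> space m n p. \<exists>u. (u, z) \<in> space m n p \<and>
           (u, z) \<in> convex hull (S \<inter> {(v, w). \<forall>k<m. nonincreasing (n k) (v k) \<and> (\<forall>i<n k. v k i \<ge> 0)}) \<and>
           (\<forall>k<m. weakly_majorizes (n k) (u k) (\<lambda>i. \<bar>x k i\<bar>))})"
proof -
  note Ssp = assms
  have cT: "convex (convex hull S)" by simp
  have fsum: "\<And>(F :: ((nat \<Rightarrow> nat \<Rightarrow> real) \<times> (nat \<Rightarrow> real)) set) c k. finite F \<Longrightarrow> fst (\<Sum>s\<in>F. c s *\<^sub>R s) k = (\<lambda>i. \<Sum>s\<in>F. c s * fst s k i)"
  proof -
    fix F :: "((nat \<Rightarrow> nat \<Rightarrow> real) \<times> (nat \<Rightarrow> real)) set" and c :: "_ \<Rightarrow> real" and k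
    assume fF: "finite F"
    show "fst (\<Sum>s\<in>F. c s *\<^sub>R s) k = (\<lambda>i. \<Sum>s\<in>F. c s * fst s k i)"
      using fst_sum_apply[OF fF, of c "\<lambda>s. s" k] by (simp add: fun_eq_iff)
  qed
  have Sv: "\<And>w z k. (w,z) \<in> S \<Longrightarrow> k < m \<Longrightarrow> w k \<in> vecs (n k)"
    using Ssp by (auto simp: space_def)
  have spv: "\<And>w z k. (w,z) \<in> space m n p \<Longrightarrow> k < m \<Longrightarrow> w k \<in> vecs (n k)"
    by (auto simp: space_def)
  have sp0: "\<And>w z k. (w,z) \<in> space m n p \<Longrightarrow> m \<le> k \<Longrightarrow> w k = (\<lambda>_. 0)"
    by (auto simp: space_def)
  have hm: "\<And>Q. convex hull (S \<inter> Q) \<subseteq> convex hull S" by (rule hull_mono) blast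
  show ?thesis
  proof (intro conjI impI)
    assume PI: "\<forall>k<m. perm_invariant S n k"
    define P :: "((nat \<Rightarrow> nat \<Rightarrow> real) \<times> (nat \<Rightarrow> real)) \<Rightarrow> nat \<Rightarrow> nat \<Rightarrow> nat" where "P = (\<lambda>s k. SOME p. p permutes {..<n k} \<and> nonincreasing (n k) (fst s k \<circ> p))"
    have Pp: "P s k permutes {..<n k} \<and> nonincreasing (n k) (fst s k \<circ> P s k)" for s k
    proof -
      have "\<exists>p. p permutes {..<n k} \<and> nonincreasing (n k) (fst s k \<circ> p)"
        by (metis decr_perm)
      then show ?thesis unfolding P_def by (rule someI_ex)
    qed
    define g :: "((nat \<Rightarrow> nat \<Rightarrow> real) \<times> (nat \<Rightarrow> real)) \<Rightarrow> ((nat \<Rightarrow> nat \<Rightarrow> real) \<times> (nat \<Rightarrow> real))" where "g = (\<lambda>s. ((\<lambda>k. if k < m then fst s k \<circ> P s k else fst s k), snd s))"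
    show "convex hull S =
        {(x, z) \<in> space m n p. \<exists>u. (u, z) \<in> space m n p \<and>
           (u, z) \<in> convex hull (S \<inter> {(v, w). \<forall>k<m. nonincreasing (n k) (v k)}) \<and>
           (\<forall>k<m. majorizes (n k) (u k) (x k))}"
    proof
      show "convex hull S \<subseteq> {(x, z) \<in> space m n p. \<exists>u. (u, z) \<in> space m n p \<and>
           (u, z) \<in> convex hull (S \<inter> {(v, w). \<forall>k<m. nonincreasing (n k) (v k)}) \<and>
           (\<forall>k<m. majorizes (n k) (u k) (x k))}"
      proof (rule hull_sub[where g = g and R = "\<lambda>x u. \<forall>k<m. majorizes (n k) (u k) (x k)", OF Ssp])
        show "snd (g s) = snd s" for s by (simp add: g_def)
        show "g s \<in> S \<inter> {(v, w). \<forall>k<m. nonincreasing (n k) (v k)}" if sS: "s \<in> S" for s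
        proof -
          have "((\<lambda>k. if k < m then fst s k \<circ> P s k else fst s k), snd s) \<in> S"
          proof (rule multi[where f = "\<lambda>k v. v \<circ> P s k"])
            show "(fst s, snd s) \<in> S" using sS by simp
            show "(w(k := w k \<circ> P s k), snd s) \<in> S" if "k < m" "(w, snd s) \<in> S" for k w
              using PI that Pp[of s k] unfolding perm_invariant_def by blast
          qed
          then show ?thesis using Pp by (simp add: g_def)
        qed
        show "\<forall>k<m. majorizes (n k) (fst (\<Sum>s\<in>F. c s *\<^sub>R g s) k) (fst (\<Sum>s\<in>F. c s *\<^sub>R s) k)"
          if F: "finite F" "F \<subseteq> S" "\<forall>s\<in>F. 0 \<le> c s" for F c
        proof (intro allI impI)
          fix k assume k: "k < m"
          have e1: "fst (\<Sum>s\<in>F. c s *\<^sub>R g s) k = (\<lambda>i. \<Sum>s\<in>F. c s * fst s k (P s k i))"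
            by (rule ext, subst fst_sum_apply[OF F(1)]) (simp add: g_def k)
          show "majorizes (n k) (fst (\<Sum>s\<in>F. c s *\<^sub>R g s) k) (fst (\<Sum>s\<in>F. c s *\<^sub>R s) k)"
            unfolding e1 fsum[OF F(1)]
            by (rule comb_major) (use F Pp in auto)
        qed
      qed
      show "{(x, z) \<in> space m n p. \<exists>u. (u, z) \<in> space m n p \<and>
           (u, z) \<in> convex hull (S \<inter> {(v, w). \<forall>k<m. nonincreasing (n k) (v k)}) \<and>
           (\<forall>k<m. majorizes (n k) (u k) (x k))} \<subseteq> convex hull S"
      proof (clarify)
        fix x z u
        assume xs: "(x, z) \<in> space m n p" and us: "(u, z) \<in> space m n p"
          and uh: "(u, z) \<in> convex hull (S \<inter> {(v, w). \<forall>k<m. nonincreasing (n k) (v k)})"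
          and maj: "\<forall>k<m. majorizes (n k) (u k) (x k)"
        have uT: "(u, z) \<in> convex hull S" using uh hm by blast
        show "(x, z) \<in> convex hull S"
        proof (rule outer[OF _ uT])
          show "\<forall>k\<ge>m. x k = u k" using sp0[OF xs] sp0[OF us] by simp
          fix k w assume k: "k < m" and wT: "(w, z) \<in> convex hull S" and wk: "w k = u k"
          have mj: "majorizes (n k) (u k) (x k)" using maj k by simp
          have ld: "length (decr (n k) (x k)) = n k" "length (decr (n k) (u k)) = n k"
            by (simp_all add: decr_def)
          show "(w(k := x k), z) \<in> convex hull S"
          proof (rule block_major[OF cT _ wT])
            show "(w'(k := w' k \<circ> \<sigma>), z') \<in> convex hull S"
              if "(w', z') \<in> convex hull S" "\<sigma> permutes {..<n k}" for w' z' \<sigma>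
              using hull_perm[of S n k w' z' \<sigma>] PI k that by blast
            show "w k \<in> vecs (n k)" using wk spv[OF us k] by simp
            show "x k \<in> vecs (n k)" using spv[OF xs k] .
            show "\<forall>j\<le>n k. sum_list (take j (decr (n k) (x k))) \<le> sum_list (take j (decr (n k) (w k)))"
            proof (intro allI impI)
              fix j assume j: "j \<le> n k"
              show "sum_list (take j (decr (n k) (x k))) \<le> sum_list (take j (decr (n k) (w k)))"
              proof (cases "j < n k")
                case True then show ?thesis using mj wk unfolding majorizes_def by simp
              next
                case False then have "j = n k" using j by simp
                then show ?thesis using mj wk ld unfolding majorizes_def by simp
              qed
            qed
            show "sum_list (decr (n k) (x k)) = sum_list (decr (n k) (w k)) \<or>
                  ((\<forall>i<n k. 0 \<le> x k i) \<and> signmove (convex hull S) (n k) k)"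
              using mj wk unfolding majorizes_def by simp
          qed
        qed
      qed
    qed
  next
    assume SI: "\<forall>k<m. sign_invariant S n k"
    have sm: "signmove (convex hull S) (n k) k" if k: "k < m" for k
    proof (rule signmove_from_flip[OF cT])
      show "(w(k := (w k)(i := - w k i)), z) \<in> convex hull S"
        if "(w, z) \<in> convex hull S" "i < n k" for w z i
        using hull_flip[OF _ Ssp k that] SI k by blast
    qed
    define g :: "((nat \<Rightarrow> nat \<Rightarrow> real) \<times> (nat \<Rightarrow> real)) \<Rightarrow> ((nat \<Rightarrow> nat \<Rightarrow> real) \<times> (nat \<Rightarrow> real))" where "g = (\<lambda>s. ((\<lambda>k. if k < m then (\<lambda>i. \<bar>fst s k i\<bar>) else fst s k), snd s))"
    show "convex hull S =
        {(x, z) \<in> space m n p. \<exists>u. (u, z) \<in> space m n p \<and>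
           (u, z) \<in> convex hull (S \<inter> {(v, w). \<forall>k<m. \<forall>i<n k. v k i \<ge> 0}) \<and>
           (\<forall>k<m. \<forall>i<n k. u k i \<ge> \<bar>x k i\<bar>)}"
    proof
      show "convex hull S \<subseteq> {(x, z) \<in> space m n p. \<exists>u. (u, z) \<in> space m n p \<and>
           (u, z) \<in> convex hull (S \<inter> {(v, w). \<forall>k<m. \<forall>i<n k. v k i \<ge> 0}) \<and>
           (\<forall>k<m. \<forall>i<n k. u k i \<ge> \<bar>x k i\<bar>)}"
      proof (rule hull_sub[where g = g and R = "\<lambda>x u. \<forall>k<m. \<forall>i<n k. u k i \<ge> \<bar>x k i\<bar>", OF Ssp])
        show "snd (g s) = snd s" for s by (simp add: g_def)
        show "g s \<in> S \<inter> {(v, w). \<forall>k<m. \<forall>i<n k. v k i \<ge> 0}" if sS: "s \<in> S" for s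
        proof -
          have "((\<lambda>k. if k < m then (\<lambda>i. \<bar>fst s k i\<bar>) else fst s k), snd s) \<in> S"
          proof (rule multi[where f = "\<lambda>k v i. \<bar>v i\<bar>"])
            show "(fst s, snd s) \<in> S" using sS by simp
            show "(w(k := (\<lambda>i. \<bar>w k i\<bar>)), snd s) \<in> S" if k: "k < m" and wS: "(w, snd s) \<in> S" for k w
            proof -
              have "(\<lambda>i. \<bar>w k i\<bar>) \<in> vecs (n k)" using Sv[OF wS k] by (simp add: vecs_def)
              then show ?thesis using SI k wS unfolding sign_invariant_def by auto
            qed
          qed
          then show ?thesis by (simp add: g_def)
        qed
        show "\<forall>k<m. \<forall>i<n k. fst (\<Sum>s\<in>F. c s *\<^sub>R g s) k i \<ge> \<bar>fst (\<Sum>s\<in>F. c s *\<^sub>R s) k i\<bar>"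
          if F: "finite F" "F \<subseteq> S" "\<forall>s\<in>F. 0 \<le> c s" for F c
        proof (intro allI impI)
          fix k i assume k: "k < m" and i: "i < n k"
          have "\<bar>fst (\<Sum>s\<in>F. c s *\<^sub>R s) k i\<bar> = \<bar>\<Sum>s\<in>F. c s * fst s k i\<bar>"
            using fsum[OF F(1), of c k] by simp
          also have "\<dots> \<le> (\<Sum>s\<in>F. \<bar>c s * fst s k i\<bar>)" by (rule sum_abs)
          also have "\<dots> = (\<Sum>s\<in>F. c s * \<bar>fst s k i\<bar>)"
            using F(3) by (intro sum.cong) (auto simp: abs_mult)
          also have "\<dots> = fst (\<Sum>s\<in>F. c s *\<^sub>R g s) k i"
            by (subst fst_sum_apply[OF F(1)]) (simp add: g_def k)
          finally show "fst (\<Sum>s\<in>F. c s *\<^sub>R g s) k i \<ge> \<bar>fst (\<Sum>s\<in>F. c s *\<^sub>R s) k i\<bar>" .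
        qed
      qed
      show "{(x, z) \<in> space m n p. \<exists>u. (u, z) \<in> space m n p \<and>
           (u, z) \<in> convex hull (S \<inter> {(v, w). \<forall>k<m. \<forall>i<n k. v k i \<ge> 0}) \<and>
           (\<forall>k<m. \<forall>i<n k. u k i \<ge> \<bar>x k i\<bar>)} \<subseteq> convex hull S"
      proof (clarify)
        fix x z u
        assume xs: "(x, z) \<in> space m n p" and us: "(u, z) \<in> space m n p"
          and uh: "(u, z) \<in> convex hull (S \<inter> {(v, w). \<forall>k<m. \<forall>i<n k. v k i \<ge> 0})"
          and le: "\<forall>k<m. \<forall>i<n k. u k i \<ge> \<bar>x k i\<bar>"
        have uT: "(u, z) \<in> convex hull S" using uh hm by blast
        show "(x, z) \<in> convex hull S"
        proof (rule outer[OF _ uT])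
          show "\<forall>k\<ge>m. x k = u k" using sp0[OF xs] sp0[OF us] by simp
          fix k w assume k: "k < m" and wT: "(w, z) \<in> convex hull S" and wk: "w k = u k"
          show "(w(k := x k), z) \<in> convex hull S"
          proof (rule block_sign[OF cT sm[OF k] wT spv[OF xs k]])
            show "w k \<in> vecs (n k)" using wk spv[OF us k] by simp
            show "\<forall>i<n k. \<bar>x k i\<bar> \<le> \<bar>w k i\<bar>" using le k wk by force
          qed
        qed
      qed
    qed
  next
    assume PSI: "\<forall>k<m. perm_invariant S n k \<and> sign_invariant S n k"
    have sm: "signmove (convex hull S) (n k) k" if k: "k < m" for k
    proof (rule signmove_from_flip[OF cT])
      show "(w(k := (w k)(i := - w k i)), z) \<in> convex hull S"
        if "(w, z) \<in> convex hull S" "i < n k" for w z i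
        using hull_flip[OF _ Ssp k that] PSI k by blast
    qed
    define P :: "((nat \<Rightarrow> nat \<Rightarrow> real) \<times> (nat \<Rightarrow> real)) \<Rightarrow> nat \<Rightarrow> nat \<Rightarrow> nat" where "P = (\<lambda>s k. SOME p. p permutes {..<n k} \<and> nonincreasing (n k) ((\<lambda>i. \<bar>fst s k i\<bar>) \<circ> p))"
    have Pp: "P s k permutes {..<n k} \<and> nonincreasing (n k) ((\<lambda>i. \<bar>fst s k i\<bar>) \<circ> P s k)" for s k
    proof -
      have "\<exists>p. p permutes {..<n k} \<and> nonincreasing (n k) ((\<lambda>i. \<bar>fst s k i\<bar>) \<circ> p)"
        by (metis decr_perm)
      then show ?thesis unfolding P_def by (rule someI_ex)
    qed
    define g :: "((nat \<Rightarrow> nat \<Rightarrow> real) \<times> (nat \<Rightarrow> real)) \<Rightarrow> ((nat \<Rightarrow> nat \<Rightarrow> real) \<times> (nat \<Rightarrow> real))" where "g = (\<lambda>s. ((\<lambda>k. if k < m then (\<lambda>i. \<bar>fst s k i\<bar>) \<circ> P s k else fst s k), snd s))"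
    show "convex hull S =
        {(x, z) \<in> space m n p. \<exists>u. (u, z) \<in> space m n p \<and>
           (u, z) \<in> convex hull (S \<inter> {(v, w). \<forall>k<m. nonincreasing (n k) (v k) \<and> (\<forall>i<n k. v k i \<ge> 0)}) \<and>
           (\<forall>k<m. weakly_majorizes (n k) (u k) (\<lambda>i. \<bar>x k i\<bar>))}"
    proof
      show "convex hull S \<subseteq> {(x, z) \<in> space m n p. \<exists>u. (u, z) \<in> space m n p \<and>
           (u, z) \<in> convex hull (S \<inter> {(v, w). \<forall>k<m. nonincreasing (n k) (v k) \<and> (\<forall>i<n k. v k i \<ge> 0)}) \<and>
           (\<forall>k<m. weakly_majorizes (n k) (u k) (\<lambda>i. \<bar>x k i\<bar>))}"
      proof (rule hull_sub[where g = g and R = "\<lambda>x u. \<forall>k<m. weakly_majorizes (n k) (u k) (\<lambda>i. \<bar>x k i\<bar>)", OF Ssp])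
        show "snd (g s) = snd s" for s by (simp add: g_def)
        show "g s \<in> S \<inter> {(v, w). \<forall>k<m. nonincreasing (n k) (v k) \<and> (\<forall>i<n k. v k i \<ge> 0)}"
          if sS: "s \<in> S" for s
        proof -
          have "((\<lambda>k. if k < m then (\<lambda>i. \<bar>fst s k i\<bar>) \<circ> P s k else fst s k), snd s) \<in> S"
          proof (rule multi[where f = "\<lambda>k v. (\<lambda>i. \<bar>v i\<bar>) \<circ> P s k"])
            show "(fst s, snd s) \<in> S" using sS by simp
            show "(w(k := (\<lambda>i. \<bar>w k i\<bar>) \<circ> P s k), snd s) \<in> S" if k: "k < m" and wS: "(w, snd s) \<in> S" for k w
            proof -
              have "(\<lambda>i. \<bar>w k i\<bar>) \<in> vecs (n k)" using Sv[OF wS k] by (simp add: vecs_def)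
              then have w1: "(w(k := (\<lambda>i. \<bar>w k i\<bar>)), snd s) \<in> S"
                using PSI k wS unfolding sign_invariant_def by auto
              have "((w(k := (\<lambda>i. \<bar>w k i\<bar>)))(k := (w(k := (\<lambda>i. \<bar>w k i\<bar>))) k \<circ> P s k), snd s) \<in> S"
                using PSI k w1 Pp[of s k] unfolding perm_invariant_def by blast
              then show ?thesis by simp
            qed
          qed
          moreover have "\<forall>k<m. \<forall>i<n k. 0 \<le> ((\<lambda>i. \<bar>fst s k i\<bar>) \<circ> P s k) i" by simp
          ultimately show ?thesis using Pp by (simp add: g_def)
        qed
        show "\<forall>k<m. weakly_majorizes (n k) (fst (\<Sum>s\<in>F. c s *\<^sub>R g s) k) (\<lambda>i. \<bar>fst (\<Sum>s\<in>F. c s *\<^sub>R s) k i\<bar>)"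
          if F: "finite F" "F \<subseteq> S" "\<forall>s\<in>F. 0 \<le> c s" for F c
        proof (intro allI impI)
          fix k assume k: "k < m"
          have e1: "fst (\<Sum>s\<in>F. c s *\<^sub>R g s) k = (\<lambda>i. \<Sum>s\<in>F. c s * (\<lambda>i. \<bar>fst s k i\<bar>) (P s k i))"
            by (rule ext, subst fst_sum_apply[OF F(1)]) (simp add: g_def k)
          have Y: "\<forall>i<n k. \<bar>fst (\<Sum>s\<in>F. c s *\<^sub>R s) k i\<bar> \<le> (\<Sum>s\<in>F. c s * (\<lambda>i. \<bar>fst s k i\<bar>) i)"
          proof (intro allI impI)
            fix i
            have "\<bar>fst (\<Sum>s\<in>F. c s *\<^sub>R s) k i\<bar> = \<bar>\<Sum>s\<in>F. c s * fst s k i\<bar>"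
              using fsum[OF F(1), of c k] by simp
            also have "\<dots> \<le> (\<Sum>s\<in>F. \<bar>c s * fst s k i\<bar>)" by (rule sum_abs)
            also have "\<dots> = (\<Sum>s\<in>F. c s * (\<lambda>i. \<bar>fst s k i\<bar>) i)"
              using F(3) by (intro sum.cong) (auto simp: abs_mult)
            finally show "\<bar>fst (\<Sum>s\<in>F. c s *\<^sub>R s) k i\<bar> \<le> (\<Sum>s\<in>F. c s * (\<lambda>i. \<bar>fst s k i\<bar>) i)" .
          qed
          show "weakly_majorizes (n k) (fst (\<Sum>s\<in>F. c s *\<^sub>R g s) k) (\<lambda>i. \<bar>fst (\<Sum>s\<in>F. c s *\<^sub>R s) k i\<bar>)"
            unfolding e1
            by (rule comb_wmajor[where X = "\<lambda>s i. \<bar>fst s k i\<bar>" and P = "\<lambda>s. P s k"]) (use F Pp Y in auto)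
        qed
      qed
      show "{(x, z) \<in> space m n p. \<exists>u. (u, z) \<in> space m n p \<and>
           (u, z) \<in> convex hull (S \<inter> {(v, w). \<forall>k<m. nonincreasing (n k) (v k) \<and> (\<forall>i<n k. v k i \<ge> 0)}) \<and>
           (\<forall>k<m. weakly_majorizes (n k) (u k) (\<lambda>i. \<bar>x k i\<bar>))} \<subseteq> convex hull S"
      proof (clarify)
        fix x z u
        assume xs: "(x, z) \<in> space m n p" and us: "(u, z) \<in> space m n p"
          and uh: "(u, z) \<in> convex hull (S \<inter> {(v, w). \<forall>k<m. nonincreasing (n k) (v k) \<and> (\<forall>i<n k. v k i \<ge> 0)})"
          and wm: "\<forall>k<m. weakly_majorizes (n k) (u k) (\<lambda>i. \<bar>x k i\<bar>)"
        have uT: "(u, z) \<in> convex hull S" using uh hm by blast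
        show "(x, z) \<in> convex hull S"
        proof (rule outer[OF _ uT])
          show "\<forall>k\<ge>m. x k = u k" using sp0[OF xs] sp0[OF us] by simp
          fix k w assume k: "k < m" and wT: "(w, z) \<in> convex hull S" and wk: "w k = u k"
          have wmk: "weakly_majorizes (n k) (u k) (\<lambda>i. \<bar>x k i\<bar>)" using wm k by simp
          have xv: "x k \<in> vecs (n k)" using spv[OF xs k] .
          have axv: "(\<lambda>i. \<bar>x k i\<bar>) \<in> vecs (n k)" using xv by (simp add: vecs_def)
          have wv: "w k \<in> vecs (n k)" using wk spv[OF us k] by simp
          have T1: "(w(k := (\<lambda>i. \<bar>x k i\<bar>)), z) \<in> convex hull S"
          proof (rule block_major[OF cT _ wT wv axv])
            show "(w'(k := w' k \<circ> \<sigma>), z') \<in> convex hull S"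
              if "(w', z') \<in> convex hull S" "\<sigma> permutes {..<n k}" for w' z' \<sigma>
              using hull_perm[of S n k w' z' \<sigma>] PSI k that by blast
            show "\<forall>j\<le>n k. sum_list (take j (decr (n k) (\<lambda>i. \<bar>x k i\<bar>))) \<le> sum_list (take j (decr (n k) (w k)))"
            proof (intro allI impI)
              fix j assume j: "j \<le> n k"
              show "sum_list (take j (decr (n k) (\<lambda>i. \<bar>x k i\<bar>))) \<le> sum_list (take j (decr (n k) (w k)))"
              proof (cases "j = 0")
                case True then show ?thesis by simp
              next
                case False then show ?thesis using wmk wk j unfolding weakly_majorizes_def by simp
              qed
            qed
            show "sum_list (decr (n k) (\<lambda>i. \<bar>x k i\<bar>)) = sum_list (decr (n k) (w k)) \<or>
                  ((\<forall>i<n k. 0 \<le> \<bar>x k i\<bar>) \<and> signmove (convex hull S) (n k) k)"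
              using sm[OF k] by simp
          qed
          have "((w(k := (\<lambda>i. \<bar>x k i\<bar>)))(k := x k), z) \<in> convex hull S"
          proof (rule block_sign[OF cT sm[OF k] T1 xv])
            show "(w(k := (\<lambda>i. \<bar>x k i\<bar>))) k \<in> vecs (n k)" using axv by simp
            show "\<forall>i<n k. \<bar>x k i\<bar> \<le> \<bar>(w(k := (\<lambda>i. \<bar>x k i\<bar>))) k i\<bar>" by simp
          qed
          then show "(w(k := x k), z) \<in> convex hull S" by simp
        qed
      qed
    qed
  qed
qed

end
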